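(* Let $k\ge 1$ and let $G=K_{n_1,n_2,\dots,n_p}$ be a complete $p$-partite graph with $\delta(G)\ge k$ and $n_1\le n_2\le\dots\le n_p$. Suppose the set \[ M=\{x\in\mathbb{Z}_{>0} : \text{there is an integer } \ell \text{ with } 2\le \ell\le p,\ (\ell-1)x=k,\ x\le\min\{k,n_1,\dots,n_\ell\}\} \] is nonempty. Then $\gamma_{\times k,t}(G)\le k+\min M$.
   Context: A set $S\subseteq V(G)$ is a $k$-tuple total dominating set ($k$TDS) of a graph $G$ with $\delta(G)\ge k$ if $|N_G(x)\cap S|\ge k$ for every $x\in V(G)$. The $k$-tuple total domination number $\gamma_{\times k,t}(G)$ is the minimum cardinality of a $k$TDS of $G$. $K_{n_1,\dots,n_p}$ denotes the complete $p$-partite graph with parts of sizes $n_1,\dots,n_p$. *)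

theory Defs
  imports Main
begin

definition open_nbhd :: "'a set \<Rightarrow> ('a \<Rightarrow> 'a \<Rightarrow> bool) \<Rightarrow> 'a \<Rightarrow> 'a set" where
  "open_nbhd V E x = {y \<in> V. E x y}"

definition min_degree_ge :: "'a set \<Rightarrow> ('a \<Rightarrow> 'a \<Rightarrow> bool) \<Rightarrow> nat \<Rightarrow> bool" where
  "min_degree_ge V E k \<longleftrightarrow> (\<forall>x\<in>V. k \<le> card (open_nbhd V E x))"

definition is_kTDS :: "'a set \<Rightarrow> ('a \<Rightarrow> 'a \<Rightarrow> bool) \<Rightarrow> nat \<Rightarrow> 'a set \<Rightarrow> bool" where
  "is_kTDS V E k S \<longleftrightarrow> S \<subseteq> V \<and> (\<forall>x\<in>V. k \<le> card (open_nbhd V E x \<inter> S))"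

definition ktuple_tdom_number :: "'a set \<Rightarrow> ('a \<Rightarrow> 'a \<Rightarrow> bool) \<Rightarrow> nat \<Rightarrow> nat" where
  "ktuple_tdom_number V E k = (LEAST m. \<exists>S. is_kTDS V E k S \<and> card S = m)"

text \<open>Complete p-partite graph K_{n_1,...,n_p}: vertex (i,j) is the j-th vertex
(j < n i) of part i (1 \<le> i \<le> p); two vertices are adjacent iff they lie in
different parts.\<close>

definition cmp_vertices :: "(nat \<Rightarrow> nat) \<Rightarrow> nat \<Rightarrow> (nat \<times> nat) set" where
  "cmp_vertices n p = {(i, j). 1 \<le> i \<and> i \<le> p \<and> j < n i}"

definition cmp_adj :: "nat \<times> nat \<Rightarrow> nat \<times> nat \<Rightarrow> bool" where
  "cmp_adj x y \<longleftrightarrow> fst x \<noteq> fst y"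

end

theory Submission
  imports Defs
begin

theorem mainTheorem5:
  fixes n :: "nat \<Rightarrow> nat" and p k :: nat
  assumes "1 \<le> k"
    and "\<forall>i\<in>{1..p}. 1 \<le> n i"
    and "min_degree_ge (cmp_vertices n p) cmp_adj k"
    and "\<forall>i j. 1 \<le> i \<and> i \<le> j \<and> j \<le> p \<longrightarrow> n i \<le> n j"
    and "M = {x::nat. 0 < x \<and> (\<exists>l. 2 \<le> l \<and> l \<le> p \<and> (l - 1) * x = k
                   \<and> x \<le> k \<and> (\<forall>i\<in>{1..l}. x \<le> n i))}"
    and "M \<noteq> {}"
  shows "ktuple_tdom_number (cmp_vertices n p) cmp_adj k \<le> k + Min M"
proof -
  define x where "x = Min M"
  have fin: "finite M" using assms(5) by (auto intro: finite_subset[of _ "{..k}"])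
  have "x \<in> M" using fin assms(6) x_def by simp
  then obtain l where l: "2 \<le> l" "l \<le> p" "(l - 1) * x = k" "\<forall>i\<in>{1..l}. x \<le> n i"
    using assms(5) by auto
  define S where "S = {1..l} \<times> {0..<x}"
  have cS: "card S = k + x"
  proof -
    have "card S = l * x" unfolding S_def by (simp add: card_cartesian_product)
    also have "l * x = (l - 1) * x + x" using l(1)
    proof -
      obtain m where "l = Suc m" using l(1) by (cases l) auto
      thus ?thesis by simp
    qed
    finally show ?thesis using l(3) by simp
  qed
  have sub: "S \<subseteq> cmp_vertices n p" unfolding S_def cmp_vertices_def using l(2,4)
    by force
  have "is_kTDS (cmp_vertices n p) cmp_adj k S"
    unfolding is_kTDS_def
  proof (intro conjI ballI sub)
    fix v assume "v \<in> cmp_vertices n p"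
    obtain a b where v: "v = (a,b)" by (cases v)
    have eq: "open_nbhd (cmp_vertices n p) cmp_adj v \<inter> S = ({1..l} - {a}) \<times> {0..<x}"
      using sub unfolding open_nbhd_def cmp_adj_def S_def v by auto
    have "l - 1 \<le> card ({1..l} - {a})"
      using diff_card_le_card_Diff[of "{a}" "{1..l}"] by simp
    hence "(l - 1) * x \<le> card ({1..l} - {a}) * x" by (rule mult_right_mono) simp
    thus "k \<le> card (open_nbhd (cmp_vertices n p) cmp_adj v \<inter> S)"
      using eq l(3) by (simp only: card_cartesian_product card_atLeastLessThan) simp
  qed
  hence "ktuple_tdom_number (cmp_vertices n p) cmp_adj k \<le> card S"
    unfolding ktuple_tdom_number_def by (intro Least_le) blast
  thus ?thesis using cS x_def by simp
qed

end
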